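(* Let $E$ be a graph and let $G_E$ be the set of pairs $(p,q)$ of paths with $\mathbf{r}(p)=\mathbf{r}(q)$ (corresponding to the elements $pq^*$ of $L_K(E)$). Define $(pu,qu)\preceq(p,q)$ for every $(p,q)\in G_E$ and every path $u$ with $\mathbf{s}(u)=\mathbf{r}(p)$ ("$(pu,qu)$ reduces to $(p,q)$"). Call $(p,q)$ irreducible if $(p,q)\preceq(r,s)$ implies $p=r$ and $q=s$. Call two elements comparable, written $(p_1,q_1)\sim(p_2,q_2)$, if there are $(p,q)\in G_E$ and paths $u_1,u_2$ with $(p_1,q_1)=(pu_1,qu_1)$ and $(p_2,q_2)=(pu_2,qu_2)$. Then: (1) every element of $G_E$ reduces to a unique irreducible element; (2) two elements of $G_E$ are comparable if and only if they reduce to the same irreducible element, and this irreducible element is unique; (3) $\sim$ is an equivalence relation on $G_E$, and all elements of one equivalence class reduce to the same (unique) irreducible element; (4) if $t$ is a canonical trace on $L_K(E)$ (for some field $K$) and $(p,q),(r,s)\in G_E$ satisfy $t\big(pq^*(rs^* )^*\big)\neq0$, then $(p,q)\sim(r,s)$.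
   Context: A (directed) graph $E=(E^0,E^1,\mathbf{s},\mathbf{r})$ has vertex set $E^0$, edge set $E^1$, source and range maps; no finiteness or countability is assumed. A path is a vertex $v$ (length $0$, $\mathbf{s}(v)=\mathbf{r}(v)=v$) or a sequence $p=e_1\cdots e_n$ of edges with $\mathbf{r}(e_i)=\mathbf{s}(e_{i+1})$, length $|p|=n$, $\mathbf{s}(p)=\mathbf{s}(e_1)$, $\mathbf{r}(p)=\mathbf{r}(e_n)$; $pu$ denotes concatenation (with $pv=p$ for the vertex $v=\mathbf{r}(p)$). A vertex $v$ is regular if $\mathbf{s}^{-1}(v)$ is nonempty and finite. The Leavitt path algebra $L_K(E)$ over a field $K$ with involution is the free $K$-algebra generated by $E^0\cup E^1\cup\{e^*:e\in E^1\}$ subject to (V) $vw=\delta_{v,w}v$; (E1) $\mathbf{s}(e)e=e\mathbf{r}(e)=e$; (E2) $\mathbf{r}(e)e^*=e^*\mathbf{s}(e)=e^*$; (CK1) $e^*f=\delta_{e,f}\mathbf{r}(e)$; (CK2) $v=\sum_{e\in\mathbf{s}^{-1}(v)}ee^*$ for regular $v$; for a path $p=e_1\cdots e_n$, $p^*=e_n^*\cdots e_1^*$, $v^*=v$, and the involution is $(\sum a_ip_iq_i^* )^*=\sum a_i^*q_ip_i^*$. A trace is an additive map $t$ with $t(xy)=t(yx)$; a trace $t$ on $L_K(E)$ is canonical if $t(pq^* )=\delta_{p,q}\,t(\mathbf{r}(p))$ for all paths $p,q$ with $\mathbf{r}(p)=\mathbf{r}(q)$. *)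

theory Defs
  imports Main
begin

record ('v, 'e) graph =
  verts :: "'v set"
  edges :: "'e set"
  src   :: "'e \<Rightarrow> 'v"
  rng   :: "'e \<Rightarrow> 'v"

definition wf_graph :: "('v, 'e) graph \<Rightarrow> bool" where
  "wf_graph E \<longleftrightarrow> src E ` edges E \<subseteq> verts E \<and> rng E ` edges E \<subseteq> verts E"

text \<open>A path is either a vertex (length 0) or a nonempty list of composable edges.\<close>
datatype ('v, 'e) path = PV 'v | PE "'e list"

fun is_path :: "('v, 'e) graph \<Rightarrow> ('v, 'e) path \<Rightarrow> bool" where
  "is_path E (PV v) \<longleftrightarrow> v \<in> verts E"
| "is_path E (PE es) \<longleftrightarrow> es \<noteq> [] \<and> set es \<subseteq> edges E \<and>
     (\<forall>i. Suc i < length es \<longrightarrow> rng E (es ! i) = src E (es ! Suc i))"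

fun psrc :: "('v, 'e) graph \<Rightarrow> ('v, 'e) path \<Rightarrow> 'v" where
  "psrc E (PV v) = v"
| "psrc E (PE es) = src E (hd es)"

fun prng :: "('v, 'e) graph \<Rightarrow> ('v, 'e) path \<Rightarrow> 'v" where
  "prng E (PV v) = v"
| "prng E (PE es) = rng E (last es)"

text \<open>Concatenation \<open>p u\<close> (meaningful when \<open>r(p) = s(u)\<close>); a vertex acts as identity.\<close>
fun pconc :: "('v, 'e) path \<Rightarrow> ('v, 'e) path \<Rightarrow> ('v, 'e) path" where
  "pconc (PV v) u = u"
| "pconc (PE es) (PV v) = PE es"
| "pconc (PE es) (PE fs) = PE (es @ fs)"

definition GE :: "('v, 'e) graph \<Rightarrow> (('v, 'e) path \<times> ('v, 'e) path) set" where
  "GE E = {(p, q). is_path E p \<and> is_path E q \<and> prng E p = prng E q}"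

text \<open>\<open>reduces E x y\<close> means \<open>x \<preceq> y\<close>: \<open>y = (p,q) \<in> G_E\<close> and \<open>x = (pu, qu)\<close> for a path \<open>u\<close>
  with \<open>s(u) = r(p)\<close>.\<close>
definition reduces :: "('v, 'e) graph \<Rightarrow> ('v, 'e) path \<times> ('v, 'e) path
                        \<Rightarrow> ('v, 'e) path \<times> ('v, 'e) path \<Rightarrow> bool" where
  "reduces E x y \<longleftrightarrow> y \<in> GE E \<and>
     (\<exists>u. is_path E u \<and> psrc E u = prng E (fst y) \<and>
          x = (pconc (fst y) u, pconc (snd y) u))"

definition irreducible :: "('v, 'e) graph \<Rightarrow> ('v, 'e) path \<times> ('v, 'e) path \<Rightarrow> bool" where
  "irreducible E x \<longleftrightarrow> x \<in> GE E \<and> (\<forall>y. reduces E x y \<longrightarrow> y = x)"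

definition comparable :: "('v, 'e) graph \<Rightarrow> ('v, 'e) path \<times> ('v, 'e) path
                           \<Rightarrow> ('v, 'e) path \<times> ('v, 'e) path \<Rightarrow> bool" where
  "comparable E x y \<longleftrightarrow> (\<exists>p q u1 u2. (p, q) \<in> GE E \<and>
      is_path E u1 \<and> psrc E u1 = prng E p \<and> is_path E u2 \<and> psrc E u2 = prng E p \<and>
      x = (pconc p u1, pconc q u1) \<and> y = (pconc p u2, pconc q u2))"

definition comparable_rel :: "('v, 'e) graph \<Rightarrow> ((('v, 'e) path \<times> ('v, 'e) path) \<times> (('v, 'e) path \<times> ('v, 'e) path)) set" where
  "comparable_rel E = {(x, y). x \<in> GE E \<and> y \<in> GE E \<and> comparable E x y}"

text \<open>A Leavitt E-family in a ring: images of vertices \<open>Pv\<close>, edges \<open>Se\<close> and ghost edges \<open>Ss\<close>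
  satisfying the defining relations (V), (E1), (E2), (CK1), (CK2) of \<open>L_K(E)\<close>.\<close>
definition leavitt_family :: "('v, 'e) graph \<Rightarrow> ('v \<Rightarrow> 'a::ring) \<Rightarrow> ('e \<Rightarrow> 'a) \<Rightarrow> ('e \<Rightarrow> 'a) \<Rightarrow> bool" where
  "leavitt_family E Pv Se Ss \<longleftrightarrow>
     (\<forall>v\<in>verts E. \<forall>w\<in>verts E. Pv v * Pv w = (if v = w then Pv v else 0)) \<and>
     (\<forall>e\<in>edges E. Pv (src E e) * Se e = Se e \<and> Se e * Pv (rng E e) = Se e) \<and>
     (\<forall>e\<in>edges E. Pv (rng E e) * Ss e = Ss e \<and> Ss e * Pv (src E e) = Ss e) \<and>
     (\<forall>e\<in>edges E. \<forall>f\<in>edges E. Ss e * Se f = (if e = f then Pv (rng E e) else 0)) \<and>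
     (\<forall>v\<in>verts E. {e\<in>edges E. src E e = v} \<noteq> {} \<and> finite {e\<in>edges E. src E e = v} \<longrightarrow>
         Pv v = (\<Sum>e\<in>{e\<in>edges E. src E e = v}. Se e * Ss e))"

fun pel :: "('v \<Rightarrow> 'a::ring) \<Rightarrow> ('e \<Rightarrow> 'a) \<Rightarrow> ('v, 'e) path \<Rightarrow> 'a" where
  "pel Pv Se (PV v) = Pv v"
| "pel Pv Se (PE []) = 0"
| "pel Pv Se (PE (e # es)) = foldl (\<lambda>a f. a * Se f) (Se e) es"

fun pstar :: "('v \<Rightarrow> 'a::ring) \<Rightarrow> ('e \<Rightarrow> 'a) \<Rightarrow> ('v, 'e) path \<Rightarrow> 'a" where
  "pstar Pv Ss (PV v) = Pv v"
| "pstar Pv Ss (PE []) = 0"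
| "pstar Pv Ss (PE (e # es)) = foldl (\<lambda>a f. Ss f * a) (Ss e) es"

definition is_trace :: "('a::ring \<Rightarrow> 'b::ab_group_add) \<Rightarrow> bool" where
  "is_trace t \<longleftrightarrow> (\<forall>x y. t (x + y) = t x + t y) \<and> (\<forall>x y. t (x * y) = t (y * x))"

definition canonical_trace :: "('v, 'e) graph \<Rightarrow> ('v \<Rightarrow> 'a::ring) \<Rightarrow> ('e \<Rightarrow> 'a) \<Rightarrow> ('e \<Rightarrow> 'a)
                                \<Rightarrow> ('a \<Rightarrow> 'b::ab_group_add) \<Rightarrow> bool" where
  "canonical_trace E Pv Se Ss t \<longleftrightarrow> is_trace t \<and>
     (\<forall>p q. is_path E p \<and> is_path E q \<and> prng E p = prng E q \<longrightarrow>
        t (pel Pv Se p * pstar Pv Ss q) = (if p = q then t (Pv (prng E p)) else 0))"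

end

theory Submission
  imports Defs
begin

fun walk :: "('v,'e) graph \<Rightarrow> 'v \<Rightarrow> 'e list \<Rightarrow> bool" where
  "walk E v [] = (v \<in> verts E)"
| "walk E v (e#es) = (v \<in> verts E \<and> e \<in> edges E \<and> src E e = v \<and> walk E (rng E e) es)"

fun wend :: "('v,'e) graph \<Rightarrow> 'v \<Rightarrow> 'e list \<Rightarrow> 'v" where
  "wend E v [] = v" | "wend E v (e#es) = wend E (rng E e) es"

fun pedges :: "('v,'e) path \<Rightarrow> 'e list" where
  "pedges (PV v) = []" | "pedges (PE es) = es"

definition mk :: "'v \<Rightarrow> 'e list \<Rightarrow> ('v,'e) path" where
  "mk v es = (if es = [] then PV v else PE es)"

lemma walk_verts: "walk E v es \<Longrightarrow> v \<in> verts E"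
  by (cases es) auto

lemma walk_append: "walk E v (es@fs) \<longleftrightarrow> walk E v es \<and> walk E (wend E v es) fs"
  by (induction es arbitrary: v) (auto dest: walk_verts)

lemma wend_append: "wend E v (es@fs) = wend E (wend E v es) fs"
  by (induction es arbitrary: v) auto

lemma wend_last: "es \<noteq> [] \<Longrightarrow> wend E v es = rng E (last es)"
  by (induction es arbitrary: v) auto

lemma chain_cons2:
  "(\<forall>i. Suc i < length (e#f#fs) \<longrightarrow> r ((e#f#fs)!i) = s ((e#f#fs)!Suc i)) \<longleftrightarrow>
   r e = s f \<and> (\<forall>i. Suc i < length (f#fs) \<longrightarrow> r ((f#fs)!i) = s ((f#fs)!Suc i))"
  apply (rule iffI)
   apply (intro conjI allI impI)
    apply (drule spec[of _ 0], simp)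
   apply (drule_tac x="Suc i" in spec, simp)
  apply clarify
  apply (case_tac i)
   apply simp
  apply simp
  done

lemma is_path_PE: "wf_graph E \<Longrightarrow> is_path E (PE es) \<longleftrightarrow> es \<noteq> [] \<and> walk E (src E (hd es)) es"
proof (induction es)
  case Nil
  then show ?case by simp
next
  case (Cons e es)
  show ?case
  proof (cases es)
    case Nil
    then show ?thesis using Cons.prems by (auto simp: wf_graph_def)
  next
    case (Cons f fs)
    have "is_path E (PE (e#f#fs)) \<longleftrightarrow> e \<in> edges E \<and> rng E e = src E f \<and> is_path E (PE (f#fs))"
      using chain_cons2[where r="rng E" and s="src E" and e=e and f=f and fs=fs] by auto
    then show ?thesis using Cons.IH Cons.prems Cons \<open>wf_graph E\<close> by (auto simp: wf_graph_def)
  qed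
qed

lemma is_path_walk: "wf_graph E \<Longrightarrow> is_path E p \<longleftrightarrow> p \<noteq> PE [] \<and> walk E (psrc E p) (pedges p)"
  by (cases p) (auto simp del: is_path.simps(2) simp add: is_path_PE)

lemma prng_wend: "is_path E p \<Longrightarrow> prng E p = wend E (psrc E p) (pedges p)"
  by (cases p) (auto simp: wend_last)

lemma mk_props: "wf_graph E \<Longrightarrow> walk E v es \<Longrightarrow>
   is_path E (mk v es) \<and> psrc E (mk v es) = v \<and> pedges (mk v es) = es \<and> prng E (mk v es) = wend E v es"
  apply (cases es)
   apply (simp add: mk_def)
  apply (simp del: is_path.simps(2) add: mk_def is_path_PE wend_last)
  done

lemma path_eq: "is_path E p \<Longrightarrow> p = mk (psrc E p) (pedges p)"
  by (cases p) (auto simp: mk_def)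

lemma pconc_mk: "is_path E p \<Longrightarrow> is_path E u \<Longrightarrow> psrc E u = prng E p \<Longrightarrow>
   pconc p u = mk (psrc E p) (pedges p @ pedges u)"
  apply (cases p; cases u)
     apply (auto simp: mk_def)
  done

lemma reduces_char:
  assumes wf: "wf_graph E"
  shows "reduces E x y \<longleftrightarrow> x \<in> GE E \<and> y \<in> GE E \<and> psrc E (fst x) = psrc E (fst y) \<and> psrc E (snd x) = psrc E (snd y)
     \<and> (\<exists>ws. pedges (fst x) = pedges (fst y) @ ws \<and> pedges (snd x) = pedges (snd y) @ ws)"
proof
  assume "reduces E x y"
  then obtain p q u where y: "y = (p,q)" and pq: "(p,q) \<in> GE E" and u: "is_path E u" "psrc E u = prng E p"
    and x: "x = (pconc p u, pconc q u)" unfolding reduces_def by (cases y) auto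
  have pp: "is_path E p" "is_path E q" "prng E p = prng E q" using pq by (auto simp: GE_def)
  have wp: "walk E (psrc E p) (pedges p @ pedges u)" "walk E (psrc E q) (pedges q @ pedges u)"
    using pp u wf by (auto simp: walk_append is_path_walk prng_wend)
  have e1: "pconc p u = mk (psrc E p) (pedges p @ pedges u)" "pconc q u = mk (psrc E q) (pedges q @ pedges u)"
    using pconc_mk pp u by metis+
  have wu: "wend E (psrc E p) (pedges p @ pedges u) = wend E (psrc E q) (pedges q @ pedges u)"
    using pp u by (simp add: wend_append prng_wend[symmetric])
  show "x \<in> GE E \<and> y \<in> GE E \<and> psrc E (fst x) = psrc E (fst y) \<and> psrc E (snd x) = psrc E (snd y)
     \<and> (\<exists>ws. pedges (fst x) = pedges (fst y) @ ws \<and> pedges (snd x) = pedges (snd y) @ ws)"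
    using mk_props[OF wf wp(1)] mk_props[OF wf wp(2)] wu pq unfolding x y e1 GE_def by auto
next
  assume h: "x \<in> GE E \<and> y \<in> GE E \<and> psrc E (fst x) = psrc E (fst y) \<and> psrc E (snd x) = psrc E (snd y)
     \<and> (\<exists>ws. pedges (fst x) = pedges (fst y) @ ws \<and> pedges (snd x) = pedges (snd y) @ ws)"
  obtain p q p' q' where y: "y = (p,q)" and x: "x = (p',q')" by (cases x, cases y) auto
  obtain ws where ws: "pedges p' = pedges p @ ws" "pedges q' = pedges q @ ws" using h x y by auto
  have pp: "is_path E p" "is_path E q" "prng E p = prng E q" "is_path E p'" "is_path E q'"
    using h x y by (auto simp: GE_def)
  have s: "psrc E p' = psrc E p" "psrc E q' = psrc E q" using h x y by auto
  have "walk E (psrc E p) (pedges p @ ws)" using pp(4) ws s wf by (simp add: is_path_walk)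
  then have wws: "walk E (prng E p) ws" using pp by (simp add: walk_append prng_wend)
  define u where "u = mk (prng E p) ws"
  have u: "is_path E u" "psrc E u = prng E p" "pedges u = ws" using mk_props[OF wf wws] u_def by auto
  have "pconc p u = p'" using pconc_mk[OF pp(1) u(1,2)] u(3) path_eq[OF pp(4)] ws s by simp
  moreover have "pconc q u = q'" using pconc_mk[OF pp(2) u(1)] u pp(3) path_eq[OF pp(5)] ws s by simp
  ultimately show "reduces E x y" unfolding reduces_def using h x y u by auto
qed


lemma GE_eq: "x \<in> GE E \<Longrightarrow> y \<in> GE E \<Longrightarrow> psrc E (fst x) = psrc E (fst y) \<Longrightarrow> psrc E (snd x) = psrc E (snd y)
   \<Longrightarrow> pedges (fst x) = pedges (fst y) \<Longrightarrow> pedges (snd x) = pedges (snd y) \<Longrightarrow> x = y"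
proof -
  assume h: "x \<in> GE E" "y \<in> GE E" "psrc E (fst x) = psrc E (fst y)" "psrc E (snd x) = psrc E (snd y)"
   "pedges (fst x) = pedges (fst y)" "pedges (snd x) = pedges (snd y)"
  have "is_path E (fst x)" "is_path E (snd x)" "is_path E (fst y)" "is_path E (snd y)"
    using h(1,2) unfolding GE_def by auto
  then have "fst x = fst y" "snd x = snd y" using h path_eq by metis+
  then show "x = y" by (simp add: prod_eq_iff)
qed

lemma reduces_refl: "wf_graph E \<Longrightarrow> x \<in> GE E \<Longrightarrow> reduces E x x"
  by (simp add: reduces_char)

lemma reduces_GE: "reduces E x y \<Longrightarrow> y \<in> GE E"
  by (simp add: reduces_def)

lemma reduces_GE1: "wf_graph E \<Longrightarrow> reduces E x y \<Longrightarrow> x \<in> GE E"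
  by (simp add: reduces_char)

lemma reduces_trans: "wf_graph E \<Longrightarrow> reduces E x y \<Longrightarrow> reduces E y z \<Longrightarrow> reduces E x z"
  unfolding reduces_char by (metis append.assoc)

lemma reduces_exists: "wf_graph E \<Longrightarrow> x \<in> GE E \<Longrightarrow> \<exists>z. irreducible E z \<and> reduces E x z"
proof (induction "length (pedges (fst x)) + length (pedges (snd x))" arbitrary: x rule: less_induct)
  case less
  show ?case
  proof (cases "irreducible E x")
    case True
    then show ?thesis using reduces_refl less.prems by blast
  next
    case False
    then obtain y where r: "reduces E x y" and ne: "y \<noteq> x" using less.prems unfolding irreducible_def by blast
    then obtain ws where ws: "pedges (fst x) = pedges (fst y) @ ws" "pedges (snd x) = pedges (snd y) @ ws"
      using less.prems reduces_char by blast
    have "ws \<noteq> []"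
    proof
      assume "ws = []"
      then show False using ne ws r GE_eq[of x E y] less.prems unfolding reduces_char[OF less.prems(1)] by simp
    qed
    then have "length (pedges (fst y)) + length (pedges (snd y)) < length (pedges (fst x)) + length (pedges (snd x))"
      using ws by simp
    then obtain z where "irreducible E z" "reduces E y z" using less.hyps less.prems reduces_GE r by blast
    then show ?thesis using reduces_trans r less.prems by blast
  qed
qed

lemma append_suffix_le: "xs @ ys = xs' @ ys' \<Longrightarrow> length ys \<le> length ys' \<Longrightarrow>
   xs = xs' @ take (length ys' - length ys) ys' \<and> ys' = take (length ys' - length ys) ys' @ ys"
proof -
  assume h: "xs @ ys = xs' @ ys'" "length ys \<le> length ys'"
  define k where "k = length ys' - length ys"
  have "xs @ ys = (xs' @ take k ys') @ drop k ys'" using h by simp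
  moreover have "length (drop k ys') = length ys" using h k_def by simp
  ultimately have "xs = xs' @ take k ys' \<and> ys = drop k ys'" by (metis append_eq_append_conv)
  then show ?thesis using k_def by (metis append_take_drop_id)
qed

lemma reduces_two: "wf_graph E \<Longrightarrow> reduces E x y1 \<Longrightarrow> reduces E x y2 \<Longrightarrow> reduces E y1 y2 \<or> reduces E y2 y1"
proof -
  assume wf: "wf_graph E" and r1: "reduces E x y1" and r2: "reduces E x y2"
  obtain w1 where w1: "pedges (fst x) = pedges (fst y1) @ w1" "pedges (snd x) = pedges (snd y1) @ w1"
    using r1 wf reduces_char by blast
  obtain w2 where w2: "pedges (fst x) = pedges (fst y2) @ w2" "pedges (snd x) = pedges (snd y2) @ w2"
    using r2 wf reduces_char by blast
  have c: "x \<in> GE E \<and> y1 \<in> GE E \<and> y2 \<in> GE E \<and> psrc E (fst y1) = psrc E (fst y2) \<and> psrc E (snd y1) = psrc E (snd y2)"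
    using r1 r2 wf reduces_char by metis
  show ?thesis
  proof (cases "length w1 \<le> length w2")
    case True
    then have "pedges (fst y1) = pedges (fst y2) @ take (length w2 - length w1) w2"
      "pedges (snd y1) = pedges (snd y2) @ take (length w2 - length w1) w2"
      using append_suffix_le[of "pedges (fst y1)" w1 "pedges (fst y2)" w2]
        append_suffix_le[of "pedges (snd y1)" w1 "pedges (snd y2)" w2] w1 w2 by auto
    then show ?thesis using c reduces_char[OF wf] by blast
  next
    case False
    then have "pedges (fst y2) = pedges (fst y1) @ take (length w1 - length w2) w1"
      "pedges (snd y2) = pedges (snd y1) @ take (length w1 - length w2) w1"
      using append_suffix_le[of "pedges (fst y2)" w2 "pedges (fst y1)" w1]
        append_suffix_le[of "pedges (snd y2)" w2 "pedges (snd y1)" w1] w1 w2 by auto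
    then have "reduces E y2 y1" unfolding reduces_char[OF wf] using c by (auto intro!: exI[of _ "take (length w1 - length w2) w1"])
    then show ?thesis by blast
  qed
qed

lemma irred_unique: "wf_graph E \<Longrightarrow> reduces E x z1 \<Longrightarrow> reduces E x z2 \<Longrightarrow> irreducible E z1 \<Longrightarrow> irreducible E z2 \<Longrightarrow> z1 = z2"
  using reduces_two unfolding irreducible_def by metis

lemma comparable_iff: "comparable E x y \<longleftrightarrow> (\<exists>z. reduces E x z \<and> reduces E y z)"
proof
  assume "comparable E x y"
  then obtain p q u1 u2 where "(p, q) \<in> GE E" "is_path E u1" "psrc E u1 = prng E p" "is_path E u2" "psrc E u2 = prng E p"
      "x = (pconc p u1, pconc q u1)" "y = (pconc p u2, pconc q u2)" unfolding comparable_def by blast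
  then have "reduces E x (p,q)" "reduces E y (p,q)" unfolding reduces_def by auto
  then show "\<exists>z. reduces E x z \<and> reduces E y z" by blast
next
  assume "\<exists>z. reduces E x z \<and> reduces E y z"
  then obtain p q where "reduces E x (p,q)" "reduces E y (p,q)" by auto
  then show "comparable E x y" unfolding reduces_def comparable_def by auto
qed


fun SE :: "('v,'e) graph \<Rightarrow> ('v \<Rightarrow> 'a::ring) \<Rightarrow> ('e \<Rightarrow> 'a) \<Rightarrow> 'v \<Rightarrow> 'e list \<Rightarrow> 'a" where
  "SE E Pv Se a [] = Pv a" | "SE E Pv Se a (e#es) = Se e * SE E Pv Se (rng E e) es"

fun SS :: "('v,'e) graph \<Rightarrow> ('v \<Rightarrow> 'a::ring) \<Rightarrow> ('e \<Rightarrow> 'a) \<Rightarrow> 'v \<Rightarrow> 'e list \<Rightarrow> 'a" where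
  "SS E Pv Ss a [] = Pv a" | "SS E Pv Ss a (e#es) = SS E Pv Ss (rng E e) es * Ss e"

lemma foldl_l: "foldl (\<lambda>a f. a * Se f) (x * y) fs = x * foldl (\<lambda>a f. a * Se f) y (fs::'e list)" for x y :: "'a::ring"
  by (induction fs arbitrary: y) (auto simp: mult.assoc)

lemma foldl_r: "foldl (\<lambda>a f. Ss f * a) (y * x) fs = foldl (\<lambda>a f. Ss f * a) y (fs::'e list) * x" for x y :: "'a::ring"
  by (induction fs arbitrary: y) (auto simp: mult.assoc[symmetric])

lemma pel_SE: "leavitt_family E Pv Se Ss \<Longrightarrow> walk E a es \<Longrightarrow> pel Pv Se (mk a es) = SE E Pv Se a es"
proof (induction es arbitrary: a)
  case Nil
  then show ?case by (simp add: mk_def)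
next
  case (Cons e es)
  show ?case
  proof (cases es)
    case Nil
    then show ?thesis using Cons.prems by (simp add: mk_def leavitt_family_def)
  next
    case (Cons f fs)
    have "pel Pv Se (mk a (e#es)) = Se e * pel Pv Se (mk (rng E e) es)"
      using Cons by (simp add: mk_def foldl_l[where x="Se e"])
    then show ?thesis using Cons.IH Cons.prems by simp
  qed
qed

lemma pstar_SS: "leavitt_family E Pv Se Ss \<Longrightarrow> walk E a es \<Longrightarrow> pstar Pv Ss (mk a es) = SS E Pv Ss a es"
proof (induction es arbitrary: a)
  case Nil
  then show ?case by (simp add: mk_def)
next
  case (Cons e es)
  show ?case
  proof (cases es)
    case Nil
    then show ?thesis using Cons.prems by (simp add: mk_def leavitt_family_def)
  next
    case (Cons f fs)
    have "pstar Pv Ss (mk a (e#es)) = pstar Pv Ss (mk (rng E e) es) * Ss e"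
      using Cons by (simp add: mk_def foldl_r[where x="Ss e"])
    then show ?thesis using Cons.IH Cons.prems by simp
  qed
qed

lemma SE_left: "leavitt_family E Pv Se Ss \<Longrightarrow> walk E a es \<Longrightarrow> Pv a * SE E Pv Se a es = SE E Pv Se a es"
  by (cases es) (auto simp: leavitt_family_def mult.assoc[symmetric])

lemma SS_right: "leavitt_family E Pv Se Ss \<Longrightarrow> walk E a es \<Longrightarrow> SS E Pv Ss a es * Pv a = SS E Pv Ss a es"
  by (cases es) (auto simp: leavitt_family_def mult.assoc)

lemma SE_append: "leavitt_family E Pv Se Ss \<Longrightarrow> walk E a (es@ws) \<Longrightarrow>
   SE E Pv Se a (es@ws) = SE E Pv Se a es * SE E Pv Se (wend E a es) ws"
  by (induction es arbitrary: a) (auto simp: SE_left mult.assoc)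

lemma SS_append: "leavitt_family E Pv Se Ss \<Longrightarrow> walk E a (es@ws) \<Longrightarrow>
   SS E Pv Ss a (es@ws) = SS E Pv Ss (wend E a es) ws * SS E Pv Ss a es"
  by (induction es arbitrary: a) (auto simp: SS_right mult.assoc)

lemma SSSE_zero: "leavitt_family E Pv Se Ss \<Longrightarrow> walk E a es \<Longrightarrow> walk E b fs \<Longrightarrow> a \<noteq> b \<Longrightarrow>
   SS E Pv Ss a es * SE E Pv Se b fs = 0"
proof -
  assume lf: "leavitt_family E Pv Se Ss" and w: "walk E a es" "walk E b fs" and ne: "a \<noteq> b"
  have "SS E Pv Ss a es * SE E Pv Se b fs = SS E Pv Ss a es * (Pv a * Pv b) * SE E Pv Se b fs"
    using SS_right[OF lf w(1)] SE_left[OF lf w(2)] by (metis mult.assoc)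
  also have "Pv a * Pv b = 0" using lf ne walk_verts[OF w(1)] walk_verts[OF w(2)] by (simp add: leavitt_family_def)
  finally show ?thesis by simp
qed

lemma SSSE: "leavitt_family E Pv Se Ss \<Longrightarrow> walk E a es \<Longrightarrow> walk E b fs \<Longrightarrow>
   SS E Pv Ss a es * SE E Pv Se b fs \<noteq> 0 \<Longrightarrow>
   a = b \<and> ((\<exists>ws. fs = es @ ws \<and> SS E Pv Ss a es * SE E Pv Se b fs = SE E Pv Se (wend E a es) ws)
          \<or> (\<exists>ws. es = fs @ ws \<and> SS E Pv Ss a es * SE E Pv Se b fs = SS E Pv Ss (wend E b fs) ws))"
proof (induction es arbitrary: a b fs)
  case Nil
  then have "a = b" using SSSE_zero by metis
  then show ?case using Nil SE_left by fastforce
next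
  case (Cons e es)
  have ab: "a = b" using Cons.prems SSSE_zero by metis
  show ?case
  proof (cases fs)
    case Nil
    then show ?thesis using ab Cons.prems SS_right[OF Cons.prems(1,2)] by auto
  next
    case (Cons f fs')
    note fsC = this
    have ef: "e \<in> edges E" "f \<in> edges E" using Cons.prems fsC by auto
    have eq1: "SS E Pv Ss a (e#es) * SE E Pv Se b fs = SS E Pv Ss (rng E e) es * (Ss e * Se f) * SE E Pv Se (rng E f) fs'"
      using fsC by (simp add: mult.assoc)
    show ?thesis
    proof (cases "e = f")
      case False
      then have "Ss e * Se f = 0" using Cons.prems(1) ef by (simp add: leavitt_family_def)
      then show ?thesis using eq1 Cons.prems(4) by simp
    next
      case True
      have we: "walk E (rng E e) es" "walk E (rng E e) fs'" using Cons.prems fsC True by auto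
      have "SS E Pv Ss a (e#es) * SE E Pv Se b fs = SS E Pv Ss (rng E e) es * Pv (rng E e) * SE E Pv Se (rng E e) fs'"
        using eq1 True Cons.prems(1) ef by (simp add: leavitt_family_def)
      also have "\<dots> = SS E Pv Ss (rng E e) es * SE E Pv Se (rng E e) fs'"
        using SS_right[OF Cons.prems(1) we(1)] by simp
      finally have eq2: "SS E Pv Ss a (e#es) * SE E Pv Se b fs = SS E Pv Ss (rng E e) es * SE E Pv Se (rng E e) fs'" .
      then have "SS E Pv Ss (rng E e) es * SE E Pv Se (rng E e) fs' \<noteq> 0" using Cons.prems(4) by simp
      from Cons.IH[OF Cons.prems(1) we this] have
        "(\<exists>ws. fs' = es @ ws \<and> SS E Pv Ss (rng E e) es * SE E Pv Se (rng E e) fs' = SE E Pv Se (wend E (rng E e) es) ws)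
         \<or> (\<exists>ws. es = fs' @ ws \<and> SS E Pv Ss (rng E e) es * SE E Pv Se (rng E e) fs' = SS E Pv Ss (wend E (rng E e) fs') ws)"
        by blast
      then show ?thesis
      proof
        assume "\<exists>ws. fs' = es @ ws \<and> SS E Pv Ss (rng E e) es * SE E Pv Se (rng E e) fs' = SE E Pv Se (wend E (rng E e) es) ws"
        then obtain ws where "fs' = es @ ws" "SS E Pv Ss (rng E e) es * SE E Pv Se (rng E e) fs' = SE E Pv Se (wend E (rng E e) es) ws" by blast
        then have "fs = (e#es) @ ws \<and> SS E Pv Ss a (e#es) * SE E Pv Se b fs = SE E Pv Se (wend E a (e#es)) ws"
          using eq2 fsC True by simp
        then show ?thesis using ab by blast
      next
        assume "\<exists>ws. es = fs' @ ws \<and> SS E Pv Ss (rng E e) es * SE E Pv Se (rng E e) fs' = SS E Pv Ss (wend E (rng E e) fs') ws"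
        then obtain ws where "es = fs' @ ws" "SS E Pv Ss (rng E e) es * SE E Pv Se (rng E e) fs' = SS E Pv Ss (wend E (rng E e) fs') ws" by blast
        then have "e#es = fs @ ws \<and> SS E Pv Ss a (e#es) * SE E Pv Se b fs = SS E Pv Ss (wend E b fs) ws"
          using eq2 fsC True by simp
        then show ?thesis using ab by blast
      qed
    qed
  qed
qed


lemma trace_zero: "is_trace t \<Longrightarrow> t 0 = 0"
  unfolding is_trace_def by (metis add_cancel_right_right add.right_neutral)

lemma part4:
  assumes wf: "wf_graph E" and lf: "leavitt_family E Pv Se Ss" and ct: "canonical_trace E Pv Se Ss t"
    and pq: "(p, q) \<in> GE E" and rs: "(r, s) \<in> GE E"
    and nz: "t (pel Pv Se p * pstar Pv Ss q * (pel Pv Se s * pstar Pv Ss r)) \<noteq> 0"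
  shows "comparable E (p, q) (r, s)"
proof -
  have pth: "is_path E p" "is_path E q" "is_path E r" "is_path E s" "prng E p = prng E q" "prng E r = prng E s"
    using pq rs by (auto simp: GE_def)
  define a1 P b1 Q a2 R b2 S where "a1 = psrc E p" "P = pedges p" "b1 = psrc E q" "Q = pedges q"
    "a2 = psrc E r" "R = pedges r" "b2 = psrc E s" "S = pedges s"
  have w: "walk E a1 P" "walk E b1 Q" "walk E a2 R" "walk E b2 S"
    using pth wf is_path_walk a1_P_b1_Q_a2_R_b2_S_def by auto
  have m: "p = mk a1 P" "q = mk b1 Q" "r = mk a2 R" "s = mk b2 S"
    using path_eq pth a1_P_b1_Q_a2_R_b2_S_def by metis+
  have ends: "wend E a1 P = wend E b1 Q" "wend E a2 R = wend E b2 S"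
    using pth prng_wend a1_P_b1_Q_a2_R_b2_S_def by metis+
  have tr: "is_trace t" using ct by (simp add: canonical_trace_def)
  have X: "pel Pv Se p * pstar Pv Ss q * (pel Pv Se s * pstar Pv Ss r)
      = SE E Pv Se a1 P * (SS E Pv Ss b1 Q * SE E Pv Se b2 S) * SS E Pv Ss a2 R"
    using m pel_SE[OF lf] pstar_SS[OF lf] w by (simp add: mult.assoc)
  have M: "SS E Pv Ss b1 Q * SE E Pv Se b2 S \<noteq> 0"
  proof
    assume "SS E Pv Ss b1 Q * SE E Pv Se b2 S = 0"
    then show False using nz X trace_zero[OF tr] by simp
  qed
  have refl: "reduces E (p,q) (p,q)" "reduces E (r,s) (r,s)" using reduces_refl wf pq rs by auto
  from SSSE[OF lf w(2) w(4) M] have b: "b1 = b2" and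
    cases: "(\<exists>ws. S = Q @ ws \<and> SS E Pv Ss b1 Q * SE E Pv Se b2 S = SE E Pv Se (wend E b1 Q) ws)
          \<or> (\<exists>ws. Q = S @ ws \<and> SS E Pv Ss b1 Q * SE E Pv Se b2 S = SS E Pv Ss (wend E b2 S) ws)" by auto
  from cases show ?thesis
  proof
    assume "\<exists>ws. S = Q @ ws \<and> SS E Pv Ss b1 Q * SE E Pv Se b2 S = SE E Pv Se (wend E b1 Q) ws"
    then obtain ws where S: "S = Q @ ws" and ev: "SS E Pv Ss b1 Q * SE E Pv Se b2 S = SE E Pv Se (wend E b1 Q) ws" by blast
    have wws: "walk E (wend E a1 P) ws" using w(4) S b ends by (simp add: walk_append)
    have wp': "walk E a1 (P @ ws)" using w(1) wws by (simp add: walk_append)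
    define p' where "p' = mk a1 (P @ ws)"
    have p': "is_path E p'" "psrc E p' = a1" "pedges p' = P @ ws" "prng E p' = wend E a1 (P @ ws)"
      using mk_props[OF wf wp'] p'_def by auto
    have "prng E p' = prng E r"
      using p'(4) ends S b prng_wend[OF pth(3)] a1_P_b1_Q_a2_R_b2_S_def by (simp add: wend_append)
    then have tc: "t (pel Pv Se p' * pstar Pv Ss r) = (if p' = r then t (Pv (prng E p')) else 0)"
      using ct p'(1) pth(3) unfolding canonical_trace_def by blast
    have "pel Pv Se p * pstar Pv Ss q * (pel Pv Se s * pstar Pv Ss r) = pel Pv Se p' * pstar Pv Ss r"
      using X ev SE_append[OF lf wp'] pel_SE[OF lf wp'] pstar_SS[OF lf w(3)] m(3) p'_def ends by simp
    then have "p' = r" using nz tc by (metis)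
    then have "reduces E (r,s) (p,q)" unfolding reduces_char[OF wf]
      using rs pq p' S b a1_P_b1_Q_a2_R_b2_S_def by auto
    then show ?thesis using refl comparable_iff by blast
  next
    assume "\<exists>ws. Q = S @ ws \<and> SS E Pv Ss b1 Q * SE E Pv Se b2 S = SS E Pv Ss (wend E b2 S) ws"
    then obtain ws where Q: "Q = S @ ws" and ev: "SS E Pv Ss b1 Q * SE E Pv Se b2 S = SS E Pv Ss (wend E b2 S) ws" by blast
    have wws: "walk E (wend E a2 R) ws" using w(2) Q b ends by (simp add: walk_append)
    have wr': "walk E a2 (R @ ws)" using w(3) wws by (simp add: walk_append)
    define r' where "r' = mk a2 (R @ ws)"
    have r': "is_path E r'" "psrc E r' = a2" "pedges r' = R @ ws" "prng E r' = wend E a2 (R @ ws)"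
      using mk_props[OF wf wr'] r'_def by auto
    have "prng E p = prng E r'"
      using r'(4) ends Q b prng_wend[OF pth(1)] a1_P_b1_Q_a2_R_b2_S_def by (simp add: wend_append)
    then have tc: "t (pel Pv Se p * pstar Pv Ss r') = (if p = r' then t (Pv (prng E p)) else 0)"
      using ct r'(1) pth(1) unfolding canonical_trace_def by blast
    have "pel Pv Se p * pstar Pv Ss q * (pel Pv Se s * pstar Pv Ss r) = pel Pv Se p * pstar Pv Ss r'"
      using X ev SS_append[OF lf wr'] pstar_SS[OF lf wr'] pel_SE[OF lf w(1)] m(1) r'_def ends
      by (simp add: mult.assoc)
    then have "p = r'" using nz tc by (metis)
    then have "reduces E (p,q) (r,s)" unfolding reduces_char[OF wf]
      using rs pq r' Q b a1_P_b1_Q_a2_R_b2_S_def by auto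
    then show ?thesis using refl comparable_iff by blast
  qed
qed


lemma comp_char: "wf_graph E \<Longrightarrow> x \<in> GE E \<Longrightarrow> y \<in> GE E \<Longrightarrow>
   comparable E x y \<longleftrightarrow> (\<exists>z. irreducible E z \<and> reduces E x z \<and> reduces E y z)"
proof
  assume wf: "wf_graph E" and "comparable E x y"
  then obtain w where w: "reduces E x w" "reduces E y w" using comparable_iff by blast
  then obtain z where "irreducible E z" "reduces E w z" using reduces_exists[OF wf] reduces_GE by blast
  then show "\<exists>z. irreducible E z \<and> reduces E x z \<and> reduces E y z" using w reduces_trans[OF wf] by blast
next
  assume "\<exists>z. irreducible E z \<and> reduces E x z \<and> reduces E y z"
  then show "comparable E x y" using comparable_iff by blast
qed

lemma comp_trans: "wf_graph E \<Longrightarrow> x \<in> GE E \<Longrightarrow> y \<in> GE E \<Longrightarrow> z \<in> GE E \<Longrightarrow>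
   comparable E x y \<Longrightarrow> comparable E y z \<Longrightarrow> comparable E x z"
proof -
  assume wf: "wf_graph E" and G: "x \<in> GE E" "y \<in> GE E" "z \<in> GE E" and c: "comparable E x y" "comparable E y z"
  obtain z1 where z1: "irreducible E z1" "reduces E x z1" "reduces E y z1" using comp_char[OF wf G(1,2)] c(1) by blast
  obtain z2 where z2: "irreducible E z2" "reduces E y z2" "reduces E z z2" using comp_char[OF wf G(2,3)] c(2) by blast
  have "z1 = z2" using irred_unique[OF wf z1(3) z2(2) z1(1) z2(1)] .
  then show ?thesis using z1 z2 comparable_iff by blast
qed

theorem lemma3p2:
  fixes E :: "('v, 'e) graph"
  assumes "wf_graph E"
  shows
    "(\<forall>x\<in>GE E. \<exists>!z. irreducible E z \<and> reduces E x z)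
   \<and> (\<forall>x\<in>GE E. \<forall>y\<in>GE E.
        (comparable E x y \<longleftrightarrow> (\<exists>z. irreducible E z \<and> reduces E x z \<and> reduces E y z))
      \<and> (comparable E x y \<longrightarrow> (\<exists>!z. irreducible E z \<and> reduces E x z \<and> reduces E y z)))
   \<and> equiv (GE E) (comparable_rel E)
   \<and> (\<forall>C\<in>GE E // comparable_rel E. \<exists>!z. irreducible E z \<and> (\<forall>x\<in>C. reduces E x z))
   \<and> (\<forall>(Pv :: 'v \<Rightarrow> 'a::ring) Se Ss (t :: 'a \<Rightarrow> 'b::ab_group_add) p q r s.
        leavitt_family E Pv Se Ss \<longrightarrow> canonical_trace E Pv Se Ss t \<longrightarrow>
        (p, q) \<in> GE E \<longrightarrow> (r, s) \<in> GE E \<longrightarrow>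
        t (pel Pv Se p * pstar Pv Ss q * (pel Pv Se s * pstar Pv Ss r)) \<noteq> 0 \<longrightarrow>
        comparable E (p, q) (r, s))"
  proof -
  have wf: "wf_graph E" by fact
  have P1: "\<forall>x\<in>GE E. \<exists>!z. irreducible E z \<and> reduces E x z"
    using reduces_exists[OF wf] irred_unique[OF wf] by blast
  have P2: "\<forall>x\<in>GE E. \<forall>y\<in>GE E.
        (comparable E x y \<longleftrightarrow> (\<exists>z. irreducible E z \<and> reduces E x z \<and> reduces E y z))
      \<and> (comparable E x y \<longrightarrow> (\<exists>!z. irreducible E z \<and> reduces E x z \<and> reduces E y z))"
  proof (intro ballI conjI impI)
    fix x y assume G: "x \<in> GE E" "y \<in> GE E"
    show "comparable E x y \<longleftrightarrow> (\<exists>z. irreducible E z \<and> reduces E x z \<and> reduces E y z)"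
      using comp_char[OF wf G] .
    assume "comparable E x y"
    then show "\<exists>!z. irreducible E z \<and> reduces E x z \<and> reduces E y z"
      using comp_char[OF wf G] irred_unique[OF wf] by blast
  qed
  have refl: "x \<in> GE E \<Longrightarrow> comparable E x x" for x
    using comparable_iff reduces_refl[OF wf] by blast
  have EQ: "equiv (GE E) (comparable_rel E)"
    unfolding equiv_def refl_on_def sym_def trans_def comparable_rel_def
  proof (intro conjI allI impI ballI)
    show "{(x, y). x \<in> GE E \<and> y \<in> GE E \<and> comparable E x y} \<subseteq> GE E \<times> GE E" by auto
  next
    fix x assume "x \<in> GE E" then show "(x, x) \<in> {(x, y). x \<in> GE E \<and> y \<in> GE E \<and> comparable E x y}"
      using refl by auto
  next
    fix x y assume "(x, y) \<in> {(x, y). x \<in> GE E \<and> y \<in> GE E \<and> comparable E x y}"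
    then show "(y, x) \<in> {(x, y). x \<in> GE E \<and> y \<in> GE E \<and> comparable E x y}"
      unfolding comparable_iff by auto
  next
    fix x y z assume "(x, y) \<in> {(x, y). x \<in> GE E \<and> y \<in> GE E \<and> comparable E x y}"
      "(y, z) \<in> {(x, y). x \<in> GE E \<and> y \<in> GE E \<and> comparable E x y}"
    then show "(x, z) \<in> {(x, y). x \<in> GE E \<and> y \<in> GE E \<and> comparable E x y}"
      using comp_trans[OF wf] by blast
  qed
  have P4: "\<forall>C\<in>GE E // comparable_rel E. \<exists>!z. irreducible E z \<and> (\<forall>x\<in>C. reduces E x z)"
  proof
    fix C assume "C \<in> GE E // comparable_rel E"
    then obtain x where x: "x \<in> GE E" and C: "C = comparable_rel E `` {x}" by (rule quotientE)
    obtain z where z: "irreducible E z" "reduces E x z" using reduces_exists[OF wf x] by blast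
    have all: "\<forall>c\<in>C. reduces E c z"
    proof
      fix c assume "c \<in> C"
      then have "c \<in> GE E" "comparable E x c" using C by (auto simp: comparable_rel_def)
      then obtain z' where "irreducible E z'" "reduces E x z'" "reduces E c z'" using comp_char[OF wf x] by blast
      then show "reduces E c z" using irred_unique[OF wf] z by metis
    qed
    have xC: "x \<in> C" using C x refl by (auto simp: comparable_rel_def)
    show "\<exists>!z. irreducible E z \<and> (\<forall>x\<in>C. reduces E x z)"
    proof (rule ex1I[of _ z])
      show "irreducible E z \<and> (\<forall>x\<in>C. reduces E x z)" using z all by blast
    next
      fix z'' assume "irreducible E z'' \<and> (\<forall>x\<in>C. reduces E x z'')"
      then show "z'' = z" using xC z irred_unique[OF wf] by metis
    qed
  qed
  have P5: "\<forall>(Pv :: 'v \<Rightarrow> 'a::ring) Se Ss (t :: 'a \<Rightarrow> 'b::ab_group_add) p q r s.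
        leavitt_family E Pv Se Ss \<longrightarrow> canonical_trace E Pv Se Ss t \<longrightarrow>
        (p, q) \<in> GE E \<longrightarrow> (r, s) \<in> GE E \<longrightarrow>
        t (pel Pv Se p * pstar Pv Ss q * (pel Pv Se s * pstar Pv Ss r)) \<noteq> 0 \<longrightarrow>
        comparable E (p, q) (r, s)"
    using part4[OF wf] by blast
  show ?thesis using P1 P2 EQ P4 P5 by blast
qed

end
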